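(* Fix an STL formula $\varphi$ and $t\in\tau$. Let $V$ be the finite set of pairs $(i,t')$ such that some predicate $s_i-\pi\ge0$ appears in a pair $(s_i-\pi\ge0,\,t')\in E(\varphi,t)$, and set $M=|V|$. Then $\eta(\varphi,S,t)$ depends on $S$ only through the vector $v(S)=(s_i[t'])_{(i,t')\in V}\in[-1,1]^M$; regard it as a function $H$ of $v\in\mathbb{R}^M$, computed by the same recursive formulas. Let $S$ be a signal such that $\eta(\psi,S,t')\neq0$ for every $(\psi,t')\in E(\varphi,t)$. Then there is an open neighborhood $U\subseteq\mathbb{R}^M$ of $v(S)$ on which $H$ is well defined and $C^\infty$. In particular, $\eta(\varphi,\cdot,t)$ is smooth at every signal outside the set where some subformula's robustness vanishes at one of its evaluation times.
   Context: Let $\tau\subseteq\mathbb{R}_{\ge 0}$ be a discrete set of time points (e.g. $\tau=\mathbb{Z}_{\ge0}$). For $t\in\tau$ and $0\le a<b$, write $[t+a,t+b]$ for the set of points $t'\in\tau$ with $t+a\le t'\le t+b$, assumed finite and nonempty, and write $N$ for its cardinality. A signal is a map $S:\tau\to[-1,1]^n$ with components $s_1,\dots,s_n$. STL formulas are generated by $\varphi::=\top\mid\bot\mid\mu\mid\neg\varphi\mid\varphi_1\wedge\cdots\wedge\varphi_m\mid\varphi_1\vee\cdots\vee\varphi_m\mid\mathbf{G}_{[a,b]}\varphi\mid\mathbf{F}_{[a,b]}\varphi$ ($m\ge 2$), where each predicate $\mu$ has the form $s_i-\pi\ge0$ with $i\in\{1,\dots,n\}$ and $\pi\in[-1,1]$.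 For $x\in\mathbb{R}$ put $[x]_+=\max(x,0)$, $[x]_-=\min(x,0)$. AGM robustness $\eta(\varphi,S,t)$ is defined recursively: $\eta(\top,S,t)=1$; $\eta(\bot,S,t)=-1$; $\eta(s_i-\pi\ge0,S,t)=\tfrac12(s_i[t]-\pi)$; $\eta(\neg\varphi,S,t)=-\eta(\varphi,S,t)$. Writing $\eta_j=\eta(\varphi_j,S,t)$: $\eta(\varphi_1\wedge\cdots\wedge\varphi_m,S,t)=\big(\prod_{j=1}^m(1+\eta_j)\big)^{1/m}-1$ if all $\eta_j>0$, and $\frac1m\sum_j[\eta_j]_-$ otherwise; $\eta(\varphi_1\vee\cdots\vee\varphi_m,S,t)=\frac1m\sum_j[\eta_j]_+$ if some $\eta_j>0$, and $1-\big(\prod_{j=1}^m(1-\eta_j)\big)^{1/m}$ otherwise. Writing $\eta_{t'}=\eta(\varphi,S,t')$ for $t'\in[t+a,t+b]$: $\eta(\mathbf{G}_{[a,b]}\varphi,S,t)=\big(\prod_{t'}(1+\eta_{t'})\big)^{1/N}-1$ if all $\eta_{t'}>0$, and $\frac1N\sum_{t'}[\eta_{t'}]_-$ otherwise; $\eta(\mathbf{F}_{[a,b]}\varphi,S,t)=\frac1N\sum_{t'}[\eta_{t'}]_+$ if some $\eta_{t'}>0$, and $1-\big(\prod_{t'}(1-\eta_{t'})\big)^{1/N}$ otherwise (products and sums over $t'\in[t+a,t+b]$). Evaluation pairs: $E(\varphi,t)$ is the smallest set of (formula, time) pairs containing $(\varphi,t)$ and closed under three rules. If $(\neg\psi,t')\in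 E$ then $(\psi,t')\in E$. If $(\psi_1\wedge\cdots\wedge\psi_m,t')$ or $(\psi_1\vee\cdots\vee\psi_m,t')$ is in $E$, then $(\psi_j,t')\in E$ for all $j$. If $(\mathbf{G}_{[a,b]}\psi,t')$ or $(\mathbf{F}_{[a,b]}\psi,t')$ is in $E$, then $(\psi,t'')\in E$ for all $t''\in[t'+a,t'+b]$. *)

theory Defs
  imports "HOL-Analysis.Analysis"
begin

text \<open>STL formulas. Pred i c is the predicate s_i - c >= 0.
  Conj / Disj take a list of (at least two) subformulas.
  Glob a b p is G_[a,b] p, Fin a b p is F_[a,b] p.\<close>
datatype stl =
    Top | Bot | Pred nat real | Neg stl
  | Conj "stl list" | Disj "stl list"
  | Glob real real stl | Fin real real stl

definition window :: "real set \<Rightarrow> real \<Rightarrow> real \<Rightarrow> real \<Rightarrow> real set" where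
  "window T t a b = {t' \<in> T. t + a \<le> t' \<and> t' \<le> t + b}"

type_synonym signal = "nat \<Rightarrow> real \<Rightarrow> real"

fun eta :: "real set \<Rightarrow> signal \<Rightarrow> stl \<Rightarrow> real \<Rightarrow> real" where
  "eta T S Top t = 1"
| "eta T S Bot t = -1"
| "eta T S (Pred i c) t = (S i t - c) / 2"
| "eta T S (Neg p) t = - eta T S p t"
| "eta T S (Conj ps) t =
     (if (\<forall>p\<in>set ps. eta T S p t > 0)
      then root (length ps) (prod_list (map (\<lambda>p. 1 + eta T S p t) ps)) - 1
      else sum_list (map (\<lambda>p. min (eta T S p t) 0) ps) / real (length ps))"
| "eta T S (Disj ps) t =
     (if (\<exists>p\<in>set ps. eta T S p t > 0)
      then sum_list (map (\<lambda>p. max (eta T S p t) 0) ps) / real (length ps)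
      else 1 - root (length ps) (prod_list (map (\<lambda>p. 1 - eta T S p t) ps)))"
| "eta T S (Glob a b p) t =
     (if (\<forall>t'\<in>window T t a b. eta T S p t' > 0)
      then root (card (window T t a b)) (\<Prod>t'\<in>window T t a b. 1 + eta T S p t') - 1
      else (\<Sum>t'\<in>window T t a b. min (eta T S p t') 0) / real (card (window T t a b)))"
| "eta T S (Fin a b p) t =
     (if (\<exists>t'\<in>window T t a b. eta T S p t' > 0)
      then (\<Sum>t'\<in>window T t a b. max (eta T S p t') 0) / real (card (window T t a b))
      else 1 - root (card (window T t a b)) (\<Prod>t'\<in>window T t a b. 1 - eta T S p t'))"

inductive_set evalpairs :: "real set \<Rightarrow> stl \<Rightarrow> real \<Rightarrow> (stl \<times> real) set"
  for T :: "real set" and phi :: stl and t :: real where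
  base: "(phi, t) \<in> evalpairs T phi t"
| neg: "(Neg p, t') \<in> evalpairs T phi t \<Longrightarrow> (p, t') \<in> evalpairs T phi t"
| conj: "(Conj ps, t') \<in> evalpairs T phi t \<Longrightarrow> p \<in> set ps \<Longrightarrow> (p, t') \<in> evalpairs T phi t"
| disj: "(Disj ps, t') \<in> evalpairs T phi t \<Longrightarrow> p \<in> set ps \<Longrightarrow> (p, t') \<in> evalpairs T phi t"
| glob: "(Glob a b p, t') \<in> evalpairs T phi t \<Longrightarrow> t'' \<in> window T t' a b \<Longrightarrow> (p, t'') \<in> evalpairs T phi t"
| fin: "(Fin a b p, t') \<in> evalpairs T phi t \<Longrightarrow> t'' \<in> window T t' a b \<Longrightarrow> (p, t'') \<in> evalpairs T phi t"

definition stl_wf :: "real set \<Rightarrow> nat \<Rightarrow> stl \<Rightarrow> real \<Rightarrow> bool" where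
  "stl_wf T n phi t \<longleftrightarrow>
     (\<forall>(p, t') \<in> evalpairs T phi t.
        (\<forall>i c. p = Pred i c \<longrightarrow> 1 \<le> i \<and> i \<le> n \<and> -1 \<le> c \<and> c \<le> 1)
      \<and> (\<forall>ps. (p = Conj ps \<or> p = Disj ps) \<longrightarrow> 2 \<le> length ps)
      \<and> (\<forall>a b q. (p = Glob a b q \<or> p = Fin a b q) \<longrightarrow>
            0 \<le> a \<and> a < b \<and> finite (window T t' a b) \<and> window T t' a b \<noteq> {}))"

definition predvars :: "real set \<Rightarrow> stl \<Rightarrow> real \<Rightarrow> (nat \<times> real) set" where
  "predvars T phi t = {(i, t'). \<exists>c. (Pred i c, t') \<in> evalpairs T phi t}"

text \<open>C-infinity on an open set U of R^m (coordinates): all partial derivatives of all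
  orders exist on U and are continuous, i.e. f lies in a family of functions that is
  closed under taking partial derivatives and consists of functions continuous on U.\<close>
definition smooth_on :: "(real ^ 'm) set \<Rightarrow> (real ^ 'm \<Rightarrow> real) \<Rightarrow> bool" where
  "smooth_on U f \<longleftrightarrow>
     (\<exists>D. f \<in> D \<and>
        (\<forall>g\<in>D. continuous_on U g \<and>
           (\<forall>j. \<exists>g'\<in>D. \<forall>x\<in>U.
               ((\<lambda>s. g (x + s *\<^sub>R axis j 1)) has_real_derivative g' x) (at 0))))"

end

theory Submission imports Defs begin

inductive_set A :: "(real^'m::finite) set \<Rightarrow> (real^'m \<Rightarrow> real) set" for U where
  Aconst: "(\<lambda>x. c) \<in> A U"
| Acoord: "(\<lambda>x. x $ k) \<in> A U"
| Aadd: "f \<in> A U \<Longrightarrow> g \<in> A U \<Longrightarrow> (\<lambda>x. f x + g x) \<in> A U"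
| Amult: "f \<in> A U \<Longrightarrow> g \<in> A U \<Longrightarrow> (\<lambda>x. f x * g x) \<in> A U"
| Ainv: "f \<in> A U \<Longrightarrow> \<forall>x\<in>U. f x > 0 \<Longrightarrow> (\<lambda>x. inverse (f x)) \<in> A U"
| Aroot: "f \<in> A U \<Longrightarrow> \<forall>x\<in>U. f x > 0 \<Longrightarrow> (\<lambda>x. root m (f x)) \<in> A U"
| Acong: "f \<in> A U \<Longrightarrow> \<forall>x\<in>U. g x = f x \<Longrightarrow> g \<in> A U"

lemma A_mono: "f \<in> A U \<Longrightarrow> V \<subseteq> U \<Longrightarrow> f \<in> A V"
  by (induction rule: A.induct) (auto intro: A.intros)

lemma A_pow: "f \<in> A U \<Longrightarrow> (\<lambda>x. f x ^ k) \<in> A U"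
proof (induction k)
  case 0 then show ?case using A.Aconst[of 1 U] by simp
next
  case (Suc k) then show ?case unfolding power_Suc by (intro A.Amult)
qed

lemma A_deriv:
  assumes U: "open U"
  shows "f \<in> A U \<Longrightarrow> continuous_on U f \<and> (\<forall>j. \<exists>f'\<in>A U. \<forall>x\<in>U.
     ((\<lambda>s. f (x + s *\<^sub>R axis j 1)) has_real_derivative f' x) (at 0))"
proof (induction rule: A.induct)
  case (Aconst c)
  show ?case
  proof (intro conjI allI)
    fix j
    show "\<exists>f'\<in>A U. \<forall>x\<in>U. ((\<lambda>s. c) has_real_derivative f' x) (at 0)"
      by (rule bexI[where x="\<lambda>x. 0"]) (auto intro: A.Aconst)
  qed auto
next
  case (Acoord k)
  show ?case
  proof (intro conjI allI)
    fix j
    show "\<exists>f'\<in>A U. \<forall>x\<in>U. ((\<lambda>s. (x + s *\<^sub>R axis j 1) $ k) has_real_derivative f' x) (at 0)"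
      by (rule bexI[where x="\<lambda>x. axis j 1 $ k"]) (auto intro!: derivative_eq_intros A.Aconst)
  qed (intro continuous_intros)
next
  case (Aadd f g)
  show ?case
  proof (intro conjI allI)
    fix j
    obtain f' where f': "f' \<in> A U" "\<forall>x\<in>U. ((\<lambda>s. f (x + s *\<^sub>R axis j 1)) has_real_derivative f' x) (at 0)"
      using Aadd.IH(1) by blast
    obtain g' where g': "g' \<in> A U" "\<forall>x\<in>U. ((\<lambda>s. g (x + s *\<^sub>R axis j 1)) has_real_derivative g' x) (at 0)"
      using Aadd.IH(2) by blast
    show "\<exists>h\<in>A U. \<forall>x\<in>U. ((\<lambda>s. f (x + s *\<^sub>R axis j 1) + g (x + s *\<^sub>R axis j 1)) has_real_derivative h x) (at 0)"
      by (rule bexI[where x="\<lambda>x. f' x + g' x"]) (use f' g' in \<open>auto intro!: DERIV_add A.Aadd\<close>)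
  qed (use Aadd.IH in \<open>auto intro!: continuous_intros\<close>)
next
  case (Amult f g)
  show ?case
  proof (intro conjI allI)
    fix j
    obtain f' where f': "f' \<in> A U" "\<forall>x\<in>U. ((\<lambda>s. f (x + s *\<^sub>R axis j 1)) has_real_derivative f' x) (at 0)"
      using Amult.IH(1) by blast
    obtain g' where g': "g' \<in> A U" "\<forall>x\<in>U. ((\<lambda>s. g (x + s *\<^sub>R axis j 1)) has_real_derivative g' x) (at 0)"
      using Amult.IH(2) by blast
    show "\<exists>h\<in>A U. \<forall>x\<in>U. ((\<lambda>s. f (x + s *\<^sub>R axis j 1) * g (x + s *\<^sub>R axis j 1)) has_real_derivative h x) (at 0)"
    proof (rule bexI[where x="\<lambda>x. f' x * g x + g' x * f x"], intro ballI)
      fix x assume x: "x \<in> U"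
      show "((\<lambda>s. f (x + s *\<^sub>R axis j 1) * g (x + s *\<^sub>R axis j 1)) has_real_derivative f' x * g x + g' x * f x) (at 0)"
        using DERIV_mult[OF f'(2)[rule_format, OF x] g'(2)[rule_format, OF x]] by simp
    qed (intro A.Aadd A.Amult f' g' Amult.hyps)
  qed (use Amult.IH in \<open>auto intro!: continuous_intros\<close>)
next
  case (Ainv f)
  have fi: "(\<lambda>x. inverse (f x)) \<in> A U" using Ainv.hyps by (rule A.Ainv)
  show ?case
  proof (intro conjI allI)
    fix j
    obtain f' where f': "f' \<in> A U" "\<forall>x\<in>U. ((\<lambda>s. f (x + s *\<^sub>R axis j 1)) has_real_derivative f' x) (at 0)"
      using Ainv.IH by blast
    show "\<exists>h\<in>A U. \<forall>x\<in>U. ((\<lambda>s. inverse (f (x + s *\<^sub>R axis j 1))) has_real_derivative h x) (at 0)"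
    proof (rule bexI[where x="\<lambda>x. (-1) * f' x * (inverse (f x) * inverse (f x))"], intro ballI)
      fix x assume x: "x \<in> U"
      show "((\<lambda>s. inverse (f (x + s *\<^sub>R axis j 1))) has_real_derivative (-1) * f' x * (inverse (f x) * inverse (f x))) (at 0)"
      proof -
        have "f x \<noteq> 0" using Ainv.hyps(2) x by force
        then show ?thesis using DERIV_inverse_fun[OF f'(2)[rule_format, OF x]]
          by (simp add: power2_eq_square)
      qed
    qed (intro A.Amult A.Aconst f' fi)
  qed (use Ainv.IH Ainv.hyps in \<open>auto intro!: continuous_intros\<close>)
next
  case (Aroot f m)
  have fr: "(\<lambda>x. root m (f x)) \<in> A U" using Aroot.hyps by (rule A.Aroot)
  show ?case
  proof (intro conjI allI)
    fix j
    obtain f' where f': "f' \<in> A U" "\<forall>x\<in>U. ((\<lambda>s. f (x + s *\<^sub>R axis j 1)) has_real_derivative f' x) (at 0)"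
      using Aroot.IH by blast
    show "\<exists>h\<in>A U. \<forall>x\<in>U. ((\<lambda>s. root m (f (x + s *\<^sub>R axis j 1))) has_real_derivative h x) (at 0)"
    proof (cases "m = 0")
      case True
      then show ?thesis by (intro bexI[where x="\<lambda>x. 0"]) (auto intro: A.Aconst)
    next
      case False
      have pw: "(\<lambda>x. real m * root m (f x) ^ (m - Suc 0)) \<in> A U"
        by (intro A.Amult A.Aconst A_pow fr)
      have pos: "\<forall>x\<in>U. real m * root m (f x) ^ (m - Suc 0) > 0"
        using False Aroot.hyps(2) by auto
      show ?thesis
      proof (rule bexI[where x="\<lambda>x. inverse (real m * root m (f x) ^ (m - Suc 0)) * f' x"], intro ballI)
        fix x assume x: "x \<in> U"
        show "((\<lambda>s. root m (f (x + s *\<^sub>R axis j 1))) has_real_derivative inverse (real m * root m (f x) ^ (m - Suc 0)) * f' x) (at 0)"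
          using DERIV_chain2[OF DERIV_real_root f'(2)[rule_format, OF x], of m] False Aroot.hyps(2) x
          by simp
      qed (intro A.Amult A.Ainv pw pos f')
    qed
  qed (use Aroot.IH in \<open>auto intro!: continuous_intros\<close>)
next
  case (Acong f g)
  show ?case
  proof (intro conjI allI)
    show "continuous_on U g" using Acong.IH Acong.hyps(2) continuous_on_cong by force
    fix j
    obtain f' where f': "f' \<in> A U" "\<forall>x\<in>U. ((\<lambda>s. f (x + s *\<^sub>R axis j 1)) has_real_derivative f' x) (at 0)"
      using Acong.IH by blast
    show "\<exists>h\<in>A U. \<forall>x\<in>U. ((\<lambda>s. g (x + s *\<^sub>R axis j 1)) has_real_derivative h x) (at 0)"
    proof (rule bexI[OF _ f'(1)], intro ballI)
      fix x assume x: "x \<in> U"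
      have op: "open ((\<lambda>s::real. x + s *\<^sub>R axis j 1) -` U)"
        by (rule continuous_open_vimage[OF U]) (intro continuous_intros)
      have ev: "eventually (\<lambda>s. x + s *\<^sub>R axis j 1 \<in> U) (nhds 0)"
        using eventually_nhds_in_open[OF op] x by simp
      have ev2: "eventually (\<lambda>s. g (x + s *\<^sub>R axis j 1) = f (x + s *\<^sub>R axis j 1)) (nhds 0)"
        by (rule eventually_mono[OF ev]) (use Acong.hyps(2) in auto)
      show "((\<lambda>s. g (x + s *\<^sub>R axis j 1)) has_real_derivative f' x) (at 0)"
        using DERIV_cong_ev[OF refl ev2 refl] f'(2) x by simp
    qed
  qed
qed

lemma A_smooth: "open U \<Longrightarrow> f \<in> A U \<Longrightarrow> smooth_on U f"
  unfolding smooth_on_def using A_deriv by blast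


lemma A_sum_list: "\<forall>p\<in>set ps. h p \<in> A U \<Longrightarrow> (\<lambda>v. sum_list (map (\<lambda>p. h p v) ps)) \<in> A U"
  by (induction ps) (auto intro: A.intros)

lemma A_prod_list: "\<forall>p\<in>set ps. h p \<in> A U \<Longrightarrow> (\<lambda>v. prod_list (map (\<lambda>p. h p v) ps)) \<in> A U"
  by (induction ps) (auto intro: A.intros)

lemma prod_list_pos': "\<forall>p\<in>set ps. (h p :: real) > 0 \<Longrightarrow> prod_list (map h ps) > 0"
  by (induction ps) auto

lemma A_sum_set: "finite I \<Longrightarrow> \<forall>p\<in>I. h p \<in> A U \<Longrightarrow> (\<lambda>v. \<Sum>p\<in>I. h p v) \<in> A U"
  by (induction I rule: finite_induct) (auto intro: A.intros)

lemma A_prod_set: "finite I \<Longrightarrow> \<forall>p\<in>I. h p \<in> A U \<Longrightarrow> (\<lambda>v. \<Prod>p\<in>I. h p v) \<in> A U"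
  by (induction I rule: finite_induct) (auto intro: A.intros)

lemma A_if: "(c \<Longrightarrow> f \<in> A U) \<Longrightarrow> (\<not> c \<Longrightarrow> g \<in> A U) \<Longrightarrow> (\<lambda>v. if c then f v else g v) \<in> A U"
  by (cases c) auto

definition good :: "(real^'m::finite \<Rightarrow> real) \<Rightarrow> real^'m \<Rightarrow> bool" where
  "good F v0 \<longleftrightarrow> (\<exists>U g. open U \<and> v0 \<in> U \<and> g \<in> A U \<and>
      (\<forall>v\<in>U. F v = g v \<and> (F v > 0 \<longleftrightarrow> F v0 > 0)))"

lemma shrink:
  assumes U: "open U" "v0 \<in> U" and g: "g \<in> A U" and Fg: "\<forall>v\<in>U. F v = g v" and nz: "F v0 \<noteq> 0"
  shows "good F v0"
proof -
  define B where "B = (if F v0 > 0 then {0<..} else {..<(0::real)})"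
  have cont: "continuous_on U g" using A_deriv[OF U(1) g] by blast
  have "open B" unfolding B_def by auto
  then have op: "open (g -` B \<inter> U)" using cont U(1) continuous_on_open_vimage by blast
  have v0: "v0 \<in> g -` B \<inter> U" using U(2) Fg nz unfolding B_def by auto
  have g': "g \<in> A (g -` B \<inter> U)" using A_mono[OF g] by blast
  have "\<forall>v\<in>g -` B \<inter> U. F v = g v \<and> (F v > 0 \<longleftrightarrow> F v0 > 0)"
    using Fg unfolding B_def by (auto split: if_splits)
  then show ?thesis unfolding good_def using op v0 g' by blast
qed

lemma combine:
  assumes "finite I" and "\<forall>i\<in>I. good (f i) v0"
  shows "\<exists>U G. open U \<and> v0 \<in> U \<and> (\<forall>i\<in>I. G i \<in> A U \<and>
            (\<forall>v\<in>U. f i v = G i v \<and> (f i v > 0 \<longleftrightarrow> f i v0 > 0)))"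
proof -
  from assms(2) obtain UU G where UG: "\<forall>i\<in>I. open (UU i) \<and> v0 \<in> UU i \<and> G i \<in> A (UU i) \<and>
      (\<forall>v\<in>UU i. f i v = G i v \<and> (f i v > 0 \<longleftrightarrow> f i v0 > 0))"
    unfolding good_def by metis
  define U where "U = (\<Inter>i\<in>I. UU i)"
  have "open U" unfolding U_def using assms(1) UG by (intro open_INT) auto
  moreover have "v0 \<in> U" unfolding U_def using UG by auto
  moreover have "\<forall>i\<in>I. G i \<in> A U \<and> (\<forall>v\<in>U. f i v = G i v \<and> (f i v > 0 \<longleftrightarrow> f i v0 > 0))"
  proof
    fix i assume i: "i \<in> I"
    have sub: "U \<subseteq> UU i" unfolding U_def using i by auto
    show "G i \<in> A U \<and> (\<forall>v\<in>U. f i v = G i v \<and> (f i v > 0 \<longleftrightarrow> f i v0 > 0))"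
      using UG i sub A_mono by blast
  qed
  ultimately show ?thesis by blast
qed

lemma eta_local:
  "(psi, t') \<in> evalpairs T phi t \<Longrightarrow> \<forall>(i, s)\<in>predvars T phi t. S1 i s = S2 i s
   \<Longrightarrow> eta T S1 psi t' = eta T S2 psi t'"
proof (induction psi arbitrary: t')
  case (Pred i c)
  then have "(i, t') \<in> predvars T phi t" unfolding predvars_def by auto
  then show ?case using Pred.prems by auto
next
  case (Neg p)
  then show ?case using evalpairs.neg by fastforce
next
  case (Conj ps)
  have h: "\<forall>p\<in>set ps. eta T S1 p t' = eta T S2 p t'"
    using Conj evalpairs.conj by blast
  then show ?case by (simp cong: map_cong)
next
  case (Disj ps)
  have h: "\<forall>p\<in>set ps. eta T S1 p t' = eta T S2 p t'"
    using Disj evalpairs.disj by blast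
  then show ?case by (simp cong: map_cong)
next
  case (Glob a b p)
  have h: "\<forall>s\<in>window T t' a b. eta T S1 p s = eta T S2 p s"
    using Glob evalpairs.glob by blast
  then show ?case by (simp cong: sum.cong prod.cong)
next
  case (Fin a b p)
  have h: "\<forall>s\<in>window T t' a b. eta T S1 p s = eta T S2 p s"
    using Fin evalpairs.fin by blast
  then show ?case by (simp cong: sum.cong prod.cong)
qed auto


lemma A_minus: "f \<in> A U \<Longrightarrow> g \<in> A U \<Longrightarrow> (\<lambda>x. f x - g x) \<in> A U"
proof -
  assume a: "f \<in> A U" "g \<in> A U"
  have "(\<lambda>x. f x + (-1) * g x) \<in> A U" by (intro A.Aadd A.Amult A.Aconst a)
  then show ?thesis by (rule A.Acong) simp
qed

lemmas Ai = A.Aconst A.Acoord A.Aadd A.Amult A_minus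

lemma sgn_tr: "\<forall>p\<in>I. G p \<in> A U \<and> (\<forall>v\<in>U. f p v = G p v \<and> (f p v > 0 \<longleftrightarrow> f p v0 > 0)) \<Longrightarrow> v \<in> U \<Longrightarrow> p \<in> I \<Longrightarrow> (f p v > 0 \<longleftrightarrow> f p v0 > 0)"
  by blast

lemma mm_tr:
  assumes "\<forall>p\<in>I. G p \<in> A U \<and> (\<forall>v\<in>U. f p v = G p v \<and> (f p v > 0 \<longleftrightarrow> f p v0 > 0))" "v \<in> U" "p \<in> I"
  shows "min (f p v) 0 = (if f p v0 > 0 then 0 else G p v) \<and> max (f p v) 0 = (if f p v0 > 0 then G p v else (0::real))"
proof -
  have "f p v = G p v" "(f p v > 0 \<longleftrightarrow> f p v0 > 0)" using assms by blast+
  then show ?thesis by auto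
qed

lemma eq_tr: "\<forall>p\<in>I. G p \<in> A U \<and> (\<forall>v\<in>U. f p v = G p v \<and> (f p v > 0 \<longleftrightarrow> f p v0 > 0)) \<Longrightarrow> v \<in> U \<Longrightarrow> p \<in> I \<Longrightarrow> f p v = G p v"
  by blast

lemma wf_win:
  assumes "stl_wf T n phi t" "(Glob a b p, s) \<in> evalpairs T phi t \<or> (Fin a b p, s) \<in> evalpairs T phi t"
  shows "finite (window T s a b)"
  using assms unfolding stl_wf_def by fastforce

lemma main_ind:
  fixes Sv :: "real^'m::finite \<Rightarrow> signal" and v0 :: "real^'m"
  assumes wf: "stl_wf T n phi t"
    and pred: "\<And>i c s. (Pred i c, s) \<in> evalpairs T phi t \<Longrightarrow> (\<exists>k. \<forall>v. Sv v i s = v $ k)"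
    and nz: "\<And>psi s. (psi, s) \<in> evalpairs T phi t \<Longrightarrow> eta T (Sv v0) psi s \<noteq> 0"
  shows "(psi, t') \<in> evalpairs T phi t \<Longrightarrow> good (\<lambda>v. eta T (Sv v) psi t') v0"
proof (induction psi arbitrary: t')
  case Top
  show ?case by (rule shrink[OF open_UNIV UNIV_I A.Aconst[of 1]]) auto
next
  case Bot
  show ?case by (rule shrink[OF open_UNIV UNIV_I A.Aconst[of "-1"]]) auto
next
  case (Pred i c)
  obtain k where k: "\<forall>v. Sv v i t' = v $ k" using pred[OF Pred.prems] by blast
  have g: "(\<lambda>v. v $ k * inverse 2 + (- c * inverse 2)) \<in> A UNIV"
    by (intro Ai)
  show ?case
    by (rule shrink[OF open_UNIV UNIV_I g]) (use k nz[OF Pred.prems] in auto)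
next
  case (Neg p)
  have "good (\<lambda>v. eta T (Sv v) p t') v0" using Neg evalpairs.neg by blast
  then obtain U g where Ug: "open U" "v0 \<in> U" "g \<in> A U" "\<forall>v\<in>U. eta T (Sv v) p t' = g v"
    unfolding good_def by blast
  have g: "(\<lambda>v. (-1) * g v) \<in> A U" by (intro Ai Ug(3))
  show ?case
    by (rule shrink[OF Ug(1,2) g]) (use Ug(4) nz[OF Neg.prems] in auto)
next
  case (Conj ps)
  let ?f = "\<lambda>p v. eta T (Sv v) p t'"
  have ch: "\<forall>p\<in>set ps. good (?f p) v0" using Conj.IH Conj.prems evalpairs.conj by blast
  obtain U G where UG: "open U" "v0 \<in> U"
    "\<forall>p\<in>set ps. G p \<in> A U \<and> (\<forall>v\<in>U. ?f p v = G p v \<and> (?f p v > 0 \<longleftrightarrow> ?f p v0 > 0))"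
    using combine[OF finite_set ch] by blast
  have "\<exists>g\<in>A U. \<forall>v\<in>U. eta T (Sv v) (Conj ps) t' = g v"
  proof (cases "\<forall>p\<in>set ps. ?f p v0 > 0")
    case True
    let ?P = "\<lambda>v. prod_list (map (\<lambda>p. 1 + G p v) ps)"
    have P: "?P \<in> A U" by (rule A_prod_list) (use UG in \<open>auto intro: Ai\<close>)
    have Ppos: "\<forall>v\<in>U. ?P v > 0"
    proof
      fix v assume v: "v \<in> U"
      have "\<forall>p\<in>set ps. 1 + G p v > 0"
      proof
        fix p assume p: "p \<in> set ps"
        have "?f p v0 > 0" using True p by blast
        then have "?f p v > 0" using sgn_tr[OF UG(3) v p] by blast
        then show "1 + G p v > 0" using eq_tr[OF UG(3) v p] by simp
      qed
      then show "?P v > 0" by (rule prod_list_pos')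
    qed
    show ?thesis
    proof (rule bexI[where x="\<lambda>v. root (length ps) (?P v) + (-1)"], intro ballI)
      fix v assume v: "v \<in> U"
      have pos: "\<forall>p\<in>set ps. ?f p v > 0" using True sgn_tr[OF UG(3) v] by blast
      have mm: "map (\<lambda>p. 1 + ?f p v) ps = map (\<lambda>p. 1 + G p v) ps" using UG v by auto
      have ee: "eta T (Sv v) (Conj ps) t' = root (length ps) (prod_list (map (\<lambda>p. 1 + ?f p v) ps)) - 1" using pos by simp
      show "eta T (Sv v) (Conj ps) t' = root (length ps) (?P v) + (-1)" unfolding ee mm by (simp add: divide_inverse)
    qed (intro A.Aadd A.Aroot A.Aconst P Ppos)
  next
    case False
    let ?Q = "\<lambda>v. sum_list (map (\<lambda>p. if ?f p v0 > 0 then 0 else G p v) ps)"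
    have Q: "?Q \<in> A U" by (rule A_sum_list) (use UG in \<open>auto intro!: A_if Ai\<close>)
    show ?thesis
    proof (rule bexI[where x="\<lambda>v. ?Q v * inverse (real (length ps))"], intro ballI)
      fix v assume v: "v \<in> U"
      have np: "\<not> (\<forall>p\<in>set ps. ?f p v > 0)" using False sgn_tr[OF UG(3) v] by blast
      have mm: "map (\<lambda>p. min (?f p v) 0) ps = map (\<lambda>p. if ?f p v0 > 0 then 0 else G p v) ps"
        by (rule map_cong[OF refl]) (use mm_tr[OF UG(3) v] in blast)
      have ee: "eta T (Sv v) (Conj ps) t' = sum_list (map (\<lambda>p. min (?f p v) 0) ps) / real (length ps)" using np by auto
      show "eta T (Sv v) (Conj ps) t' = ?Q v * inverse (real (length ps))" unfolding ee mm by (simp add: divide_inverse)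
    qed (intro A.Amult A.Aconst Q)
  qed
  then obtain g where g: "g \<in> A U" "\<forall>v\<in>U. eta T (Sv v) (Conj ps) t' = g v" by blast
  show ?case by (rule shrink[OF UG(1,2) g]) (use nz[OF Conj.prems] g(2) in auto)
next
  case (Disj ps)
  let ?f = "\<lambda>p v. eta T (Sv v) p t'"
  have ch: "\<forall>p\<in>set ps. good (?f p) v0" using Disj.IH Disj.prems evalpairs.disj by blast
  obtain U G where UG: "open U" "v0 \<in> U"
    "\<forall>p\<in>set ps. G p \<in> A U \<and> (\<forall>v\<in>U. ?f p v = G p v \<and> (?f p v > 0 \<longleftrightarrow> ?f p v0 > 0))"
    using combine[OF finite_set ch] by blast
  have "\<exists>g\<in>A U. \<forall>v\<in>U. eta T (Sv v) (Disj ps) t' = g v"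
  proof (cases "\<exists>p\<in>set ps. ?f p v0 > 0")
    case True
    let ?Q = "\<lambda>v. sum_list (map (\<lambda>p. if ?f p v0 > 0 then G p v else 0) ps)"
    have Q: "?Q \<in> A U" by (rule A_sum_list) (use UG in \<open>auto intro!: A_if Ai\<close>)
    show ?thesis
    proof (rule bexI[where x="\<lambda>v. ?Q v * inverse (real (length ps))"], intro ballI)
      fix v assume v: "v \<in> U"
      have np: "\<exists>p\<in>set ps. ?f p v > 0" using True sgn_tr[OF UG(3) v] by blast
      have mm: "map (\<lambda>p. max (?f p v) 0) ps = map (\<lambda>p. if ?f p v0 > 0 then G p v else 0) ps"
        by (rule map_cong[OF refl]) (use mm_tr[OF UG(3) v] in blast)
      have ee: "eta T (Sv v) (Disj ps) t' = sum_list (map (\<lambda>p. max (?f p v) 0) ps) / real (length ps)" using np by auto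
      show "eta T (Sv v) (Disj ps) t' = ?Q v * inverse (real (length ps))" unfolding ee mm by (simp add: divide_inverse)
    qed (intro A.Amult A.Aconst Q)
  next
    case False
    let ?P = "\<lambda>v. prod_list (map (\<lambda>p. 1 + (-1) * G p v) ps)"
    have P: "?P \<in> A U" by (rule A_prod_list) (use UG in \<open>auto intro: Ai\<close>)
    have Ppos: "\<forall>v\<in>U. ?P v > 0"
    proof
      fix v assume v: "v \<in> U"
      have "\<forall>p\<in>set ps. 1 + (-1) * G p v > 0"
      proof
        fix p assume p: "p \<in> set ps"
        have "\<not> ?f p v0 > 0" using False p by blast
        then have "\<not> ?f p v > 0" using sgn_tr[OF UG(3) v p] by blast
        then show "1 + (-1) * G p v > 0" using eq_tr[OF UG(3) v p] by simp
      qed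
      then show "?P v > 0" by (rule prod_list_pos')
    qed
    show ?thesis
    proof (rule bexI[where x="\<lambda>v. 1 + (-1) * root (length ps) (?P v)"], intro ballI)
      fix v assume v: "v \<in> U"
      have pos: "\<not> (\<exists>p\<in>set ps. ?f p v > 0)" using False sgn_tr[OF UG(3) v] by blast
      have mm: "map (\<lambda>p. 1 - ?f p v) ps = map (\<lambda>p. 1 + (-1) * G p v) ps" using UG v by auto
      have ee: "eta T (Sv v) (Disj ps) t' = 1 - root (length ps) (prod_list (map (\<lambda>p. 1 - ?f p v) ps))" using pos by simp
      show "eta T (Sv v) (Disj ps) t' = 1 + (-1) * root (length ps) (?P v)" unfolding ee mm by (simp add: divide_inverse)
    qed (intro A.Aadd A.Amult A.Aroot A.Aconst P Ppos)
  qed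
  then obtain g where g: "g \<in> A U" "\<forall>v\<in>U. eta T (Sv v) (Disj ps) t' = g v" by blast
  show ?case by (rule shrink[OF UG(1,2) g]) (use nz[OF Disj.prems] g(2) in auto)
next
  case (Glob a b p)
  let ?W = "window T t' a b"
  let ?f = "\<lambda>s v. eta T (Sv v) p s"
  have fin: "finite ?W" using wf_win[OF wf] Glob.prems by blast
  have ch: "\<forall>s\<in>?W. good (?f s) v0" using Glob.IH Glob.prems evalpairs.glob by blast
  obtain U G where UG: "open U" "v0 \<in> U"
    "\<forall>s\<in>?W. G s \<in> A U \<and> (\<forall>v\<in>U. ?f s v = G s v \<and> (?f s v > 0 \<longleftrightarrow> ?f s v0 > 0))"
    using combine[OF fin ch] by blast
  have "\<exists>g\<in>A U. \<forall>v\<in>U. eta T (Sv v) (Glob a b p) t' = g v"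
  proof (cases "\<forall>s\<in>?W. ?f s v0 > 0")
    case True
    let ?P = "\<lambda>v. \<Prod>s\<in>?W. 1 + G s v"
    have P: "?P \<in> A U" by (rule A_prod_set[OF fin]) (use UG in \<open>auto intro: Ai\<close>)
    have Ppos: "\<forall>v\<in>U. ?P v > 0"
    proof
      fix v assume v: "v \<in> U"
      have "\<forall>s\<in>?W. 1 + G s v > 0"
      proof
        fix s assume p: "s \<in> ?W"
        have "?f s v0 > 0" using True p by blast
        then have "?f s v > 0" using sgn_tr[OF UG(3) v p] by blast
        then show "1 + G s v > 0" using eq_tr[OF UG(3) v p] by simp
      qed
      then show "?P v > 0" by (intro prod_pos) auto
    qed
    show ?thesis
    proof (rule bexI[where x="\<lambda>v. root (card ?W) (?P v) + (-1)"], intro ballI)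
      fix v assume v: "v \<in> U"
      have pos: "\<forall>s\<in>?W. ?f s v > 0" using True sgn_tr[OF UG(3) v] by blast
      have "(\<Prod>s\<in>?W. 1 + ?f s v) = ?P v" using UG v by (intro prod.cong) auto
      then show "eta T (Sv v) (Glob a b p) t' = root (card ?W) (?P v) + (-1)" using pos by simp
    qed (intro A.Aadd A.Aroot A.Aconst P Ppos)
  next
    case False
    let ?Q = "\<lambda>v. \<Sum>s\<in>?W. (if ?f s v0 > 0 then 0 else G s v)"
    have Q: "?Q \<in> A U" by (rule A_sum_set[OF fin]) (use UG in \<open>auto intro!: A_if Ai\<close>)
    show ?thesis
    proof (rule bexI[where x="\<lambda>v. ?Q v * inverse (real (card ?W))"], intro ballI)
      fix v assume v: "v \<in> U"
      have np: "\<not> (\<forall>s\<in>?W. ?f s v > 0)" using False sgn_tr[OF UG(3) v] by blast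
      have "(\<Sum>s\<in>?W. min (?f s v) 0) = ?Q v"
        by (rule sum.cong[OF refl]) (use mm_tr[OF UG(3) v] in blast)
      then show "eta T (Sv v) (Glob a b p) t' = ?Q v * inverse (real (card ?W))"
        using np by (auto simp add: divide_inverse)
    qed (intro A.Amult A.Aconst Q)
  qed
  then obtain g where g: "g \<in> A U" "\<forall>v\<in>U. eta T (Sv v) (Glob a b p) t' = g v" by blast
  show ?case by (rule shrink[OF UG(1,2) g]) (use nz[OF Glob.prems] g(2) in auto)
next
  case (Fin a b p)
  let ?W = "window T t' a b"
  let ?f = "\<lambda>s v. eta T (Sv v) p s"
  have fin: "finite ?W" using wf_win[OF wf] Fin.prems by blast
  have ch: "\<forall>s\<in>?W. good (?f s) v0" using Fin.IH Fin.prems evalpairs.fin by blast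
  obtain U G where UG: "open U" "v0 \<in> U"
    "\<forall>s\<in>?W. G s \<in> A U \<and> (\<forall>v\<in>U. ?f s v = G s v \<and> (?f s v > 0 \<longleftrightarrow> ?f s v0 > 0))"
    using combine[OF fin ch] by blast
  have "\<exists>g\<in>A U. \<forall>v\<in>U. eta T (Sv v) (Fin a b p) t' = g v"
  proof (cases "\<exists>s\<in>?W. ?f s v0 > 0")
    case True
    let ?Q = "\<lambda>v. \<Sum>s\<in>?W. (if ?f s v0 > 0 then G s v else 0)"
    have Q: "?Q \<in> A U" by (rule A_sum_set[OF fin]) (use UG in \<open>auto intro!: A_if Ai\<close>)
    show ?thesis
    proof (rule bexI[where x="\<lambda>v. ?Q v * inverse (real (card ?W))"], intro ballI)
      fix v assume v: "v \<in> U"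
      have np: "\<exists>s\<in>?W. ?f s v > 0" using True sgn_tr[OF UG(3) v] by blast
      have "(\<Sum>s\<in>?W. max (?f s v) 0) = ?Q v"
        by (rule sum.cong[OF refl]) (use mm_tr[OF UG(3) v] in blast)
      then show "eta T (Sv v) (Fin a b p) t' = ?Q v * inverse (real (card ?W))"
        using np by (auto simp add: divide_inverse)
    qed (intro A.Amult A.Aconst Q)
  next
    case False
    let ?P = "\<lambda>v. \<Prod>s\<in>?W. 1 + (-1) * G s v"
    have P: "?P \<in> A U" by (rule A_prod_set[OF fin]) (use UG in \<open>auto intro: Ai\<close>)
    have Ppos: "\<forall>v\<in>U. ?P v > 0"
    proof
      fix v assume v: "v \<in> U"
      have "\<forall>s\<in>?W. 1 + (-1) * G s v > 0"
      proof
        fix s assume p: "s \<in> ?W"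
        have "\<not> ?f s v0 > 0" using False p by blast
        then have "\<not> ?f s v > 0" using sgn_tr[OF UG(3) v p] by blast
        then show "1 + (-1) * G s v > 0" using eq_tr[OF UG(3) v p] by simp
      qed
      then show "?P v > 0" by (intro prod_pos) auto
    qed
    show ?thesis
    proof (rule bexI[where x="\<lambda>v. 1 + (-1) * root (card ?W) (?P v)"], intro ballI)
      fix v assume v: "v \<in> U"
      have pos: "\<not> (\<exists>s\<in>?W. ?f s v > 0)" using False sgn_tr[OF UG(3) v] by blast
      have "(\<Prod>s\<in>?W. 1 - ?f s v) = ?P v" using UG v by (intro prod.cong) auto
      then show "eta T (Sv v) (Fin a b p) t' = 1 + (-1) * root (card ?W) (?P v)" using pos by simp
    qed (intro A.Aadd A.Amult A.Aroot A.Aconst P Ppos)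
  qed
  then obtain g where g: "g \<in> A U" "\<forall>v\<in>U. eta T (Sv v) (Fin a b p) t' = g v" by blast
  show ?case by (rule shrink[OF UG(1,2) g]) (use nz[OF Fin.prems] g(2) in auto)
qed


theorem mainTheorem7:
  fixes T :: "real set" and n :: nat and phi :: stl and t :: real
    and S :: signal and idx :: "'m::finite \<Rightarrow> nat \<times> real"
  assumes T_nonneg: "T \<subseteq> {0..}"
    and T_discrete: "\<forall>x\<in>T. \<exists>e>0. \<forall>y\<in>T. y \<noteq> x \<longrightarrow> e \<le> \<bar>y - x\<bar>"
    and t_in: "t \<in> T"
    and wf: "stl_wf T n phi t"
    and S_range: "\<forall>i\<in>{1..n}. \<forall>t'\<in>T. S i t' \<in> {-1..1}"
    and idx: "bij_betw idx UNIV (predvars T phi t)"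
    and nonzero: "\<forall>(psi, t')\<in>evalpairs T phi t. eta T S psi t' \<noteq> 0"
  shows "finite (predvars T phi t)
    \<and> (\<forall>S1 S2. (\<forall>(i, t')\<in>predvars T phi t. S1 i t' = S2 i t')
                \<longrightarrow> eta T S1 phi t = eta T S2 phi t)
    \<and> (\<exists>U. open U \<and> (\<chi> j. S (fst (idx j)) (snd (idx j))) \<in> U \<and>
         smooth_on U (\<lambda>v. eta T
            (\<lambda>i t'. if (i, t') \<in> predvars T phi t then v $ inv_into UNIV idx (i, t') else 0)
            phi t))"
proof (intro conjI)
  have rng: "range idx = predvars T phi t" using idx by (simp add: bij_betw_def)
  show "finite (predvars T phi t)" using rng[symmetric] by simp
  show "\<forall>S1 S2. (\<forall>(i, t')\<in>predvars T phi t. S1 i t' = S2 i t') \<longrightarrow> eta T S1 phi t = eta T S2 phi t"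
    using eta_local[OF evalpairs.base] by blast
  define Sv where "Sv = (\<lambda>(v::real^'m) i t'. if (i, t') \<in> predvars T phi t then v $ inv_into UNIV idx (i, t') else 0)"
  define v0 where "v0 = (\<chi> j. S (fst (idx j)) (snd (idx j)))"
  have agree: "\<forall>(i, s)\<in>predvars T phi t. Sv v0 i s = S i s"
  proof (clarify)
    fix i s assume iss: "(i, s) \<in> predvars T phi t"
    then have "idx (inv_into UNIV idx (i, s)) = (i, s)" using rng by (intro f_inv_into_f) simp
    then show "Sv v0 i s = S i s" using iss unfolding Sv_def v0_def by simp
  qed
  have pred: "\<exists>k. \<forall>v. Sv v i s = v $ k" if "(Pred i c, s) \<in> evalpairs T phi t" for i c s
  proof -
    have "(i, s) \<in> predvars T phi t" using that unfolding predvars_def by blast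
    then show ?thesis unfolding Sv_def by auto
  qed
  have nz: "eta T (Sv v0) psi s \<noteq> 0" if "(psi, s) \<in> evalpairs T phi t" for psi s
    using eta_local[OF that agree] nonzero that by auto
  have "good (\<lambda>v. eta T (Sv v) phi t) v0"
    by (rule main_ind[OF wf pred nz evalpairs.base])
  then obtain U g where Ug: "open U" "v0 \<in> U" "g \<in> A U" "\<forall>v\<in>U. eta T (Sv v) phi t = g v"
    unfolding good_def by blast
  have "(\<lambda>v. eta T (Sv v) phi t) \<in> A U" by (rule A.Acong[OF Ug(3)]) (use Ug(4) in simp)
  then have "smooth_on U (\<lambda>v. eta T (Sv v) phi t)" by (rule A_smooth[OF Ug(1)])
  then show "\<exists>U. open U \<and> (\<chi> j. S (fst (idx j)) (snd (idx j))) \<in> U \<and>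
         smooth_on U (\<lambda>v. eta T
            (\<lambda>i t'. if (i, t') \<in> predvars T phi t then v $ inv_into UNIV idx (i, t') else 0)
            phi t)"
    using Ug(1,2) unfolding Sv_def v0_def by blast
qed

end
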